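(* Let $G=x_0^4+x_1^4+x_2^4+x_3^4$ and $H=x_4^4+x_5^4+x_6^4+x_7^4+x_8^4+x_9^4$. If $K=\mathbb{Q}_2(\sqrt{2})$ with $\pi=\sqrt2$, or $K=\mathbb{Q}_2(\sqrt{10})$ with $\pi=\sqrt{10}$, then $F=G+\pi H$ has no nontrivial zero in $K^{10}$. If $K=\mathbb{Q}_2(\sqrt{-2})$ with $\pi=\sqrt{-2}$, or $K=\mathbb{Q}_2(\sqrt{-10})$ with $\pi=\sqrt{-10}$, then $F=G+(\pi+\pi^2)H$ has no nontrivial zero in $K^{10}$.
   Context: In each case $\pi$ is a uniformizer of the ring of integers of $K$. A nontrivial zero is a zero other than the all-zero vector. *)

theory Defs
  imports "HOL-Computational_Algebra.Computational_Algebra"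
begin

definition v2 :: "rat \<Rightarrow> int" where
  "v2 q = (case quotient_of q of (a, b) \<Rightarrow>
             int (multiplicity (2::int) a) - int (multiplicity (2::int) b))"

definition abs2 :: "rat \<Rightarrow> real" where
  "abs2 q = (if q = 0 then 0 else 2 powr (- real_of_int (v2 q)))"

text \<open>Q_2 is the completion of Q for abs2: its elements are represented by
  abs2-Cauchy sequences of rationals, and such a sequence represents 0 iff it is abs2-null.\<close>
definition cauchy2 :: "(nat \<Rightarrow> rat) \<Rightarrow> bool" where
  "cauchy2 X \<longleftrightarrow> (\<forall>e>0. \<exists>N. \<forall>m\<ge>N. \<forall>n\<ge>N. abs2 (X m - X n) < e)"

definition null2 :: "(nat \<Rightarrow> rat) \<Rightarrow> bool" where
  "null2 X \<longleftrightarrow> (\<forall>e>0. \<exists>N. \<forall>n\<ge>N. abs2 (X n) < e)"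

text \<open>K = Q_2(sqrt d) = Q_2[t]/(t^2 - d) (d not a square in Q_2): an element a + b sqrt d
  is a pair (a,b).  Arithmetic on pairs of rationals (the dense subfield Q(sqrt d)):\<close>
definition kadd :: "(rat \<times> rat) \<Rightarrow> (rat \<times> rat) \<Rightarrow> rat \<times> rat" where
  "kadd x y = (fst x + fst y, snd x + snd y)"

definition kmul :: "rat \<Rightarrow> (rat \<times> rat) \<Rightarrow> (rat \<times> rat) \<Rightarrow> rat \<times> rat" where
  "kmul d x y = (fst x * fst y + d * snd x * snd y, fst x * snd y + snd x * fst y)"

definition kpow4 :: "rat \<Rightarrow> (rat \<times> rat) \<Rightarrow> rat \<times> rat" where
  "kpow4 d x = (let y = kmul d x x in kmul d y y)"

definition ksum :: "(nat \<Rightarrow> rat \<times> rat) \<Rightarrow> nat set \<Rightarrow> rat \<times> rat" where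
  "ksum f A = ((\<Sum>i\<in>A. fst (f i)), (\<Sum>i\<in>A. snd (f i)))"

definition Fpoly :: "rat \<Rightarrow> (rat \<times> rat) \<Rightarrow> (nat \<Rightarrow> rat \<times> rat) \<Rightarrow> rat \<times> rat" where
  "Fpoly d c x = kadd (ksum (\<lambda>i. kpow4 d (x i)) {0..3})
                      (kmul d c (ksum (\<lambda>i. kpow4 d (x i)) {4..9}))"

definition Kcauchy :: "(nat \<Rightarrow> rat \<times> rat) \<Rightarrow> bool" where
  "Kcauchy X \<longleftrightarrow> cauchy2 (\<lambda>n. fst (X n)) \<and> cauchy2 (\<lambda>n. snd (X n))"

definition Knull :: "(nat \<Rightarrow> rat \<times> rat) \<Rightarrow> bool" where
  "Knull X \<longleftrightarrow> null2 (\<lambda>n. fst (X n)) \<and> null2 (\<lambda>n. snd (X n))"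

definition kpi :: "rat \<times> rat" where "kpi = (0, 1)"

definition has_nontrivial_zero :: "rat \<Rightarrow> (rat \<times> rat) \<Rightarrow> bool" where
  "has_nontrivial_zero d c \<longleftrightarrow>
     (\<exists>X :: nat \<Rightarrow> nat \<Rightarrow> rat \<times> rat.
        (\<forall>i<10. Kcauchy (X i)) \<and> (\<exists>i<10. \<not> Knull (X i)) \<and>
        Knull (\<lambda>n. Fpoly d c (\<lambda>i. X i n)))"

end

theory Submission
  imports Defs
begin


definition pA :: "'a::comm_ring_1 \<Rightarrow> 'a \<Rightarrow> 'a \<Rightarrow> 'a" where
  "pA d a b = a^4 + 6*d*a^2*b^2 + d^2*b^4"
definition pB :: "'a::comm_ring_1 \<Rightarrow> 'a \<Rightarrow> 'a \<Rightarrow> 'a" where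
  "pB d a b = 4*a*b*(a^2 + d*b^2)"

lemma pA_shift: "pA (d::int) (16*k+r) (16*l+s) = pA d r s + 64 * (k*r^3 + 24*k^2*r^2 + 256*k^3*r + 1024*k^4 + 3*d*l*r^2*s + 24*d*l^2*r^2 + 3*d*k*r*s^2 + 96*d*k*l*r*s + 768*d*k*l^2*r + 24*d*k^2*s^2 + 768*d*k^2*l*s + 6144*d*k^2*l^2 + d^2*l*s^3 + 24*d^2*l^2*s^2 + 256*d^2*l^3*s + 1024*d^2*l^4)"
  unfolding pA_def by algebra

lemma pB_shift: "pB (d::int) (16*k+r) (16*l+s) = pB d r s + 64 * (l*r^3 + 3*k*r^2*s + 48*k*l*r^2 + 48*k^2*r*s + 768*k^2*l*r + 256*k^3*s + 4096*k^3*l + 3*d*l*r*s^2 + 48*d*l^2*r*s + 256*d*l^3*r + d*k*s^3 + 48*d*k*l*s^2 + 768*d*k*l^2*s + 4096*d*k*l^3)"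
  unfolding pB_def by algebra

lemma pA_mod: "pA (d::int) a b mod 64 = pA d (a mod 16) (b mod 16) mod 64"
proof -
  have "\<exists>W. pA d (16*(a div 16) + a mod 16) (16*(b div 16) + b mod 16) = pA d (a mod 16) (b mod 16) + 64*W"
    by (rule exI, rule pA_shift)
  then obtain W where "pA d a b = pA d (a mod 16) (b mod 16) + 64 * W"
    by (simp del: pA_def pB_def) blast
  then show ?thesis by simp
qed

lemma pB_mod: "pB (d::int) a b mod 64 = pB d (a mod 16) (b mod 16) mod 64"
proof -
  have "\<exists>W. pB d (16*(a div 16) + a mod 16) (16*(b div 16) + b mod 16) = pB d (a mod 16) (b mod 16) + 64*W"
    by (rule exI, rule pB_shift)
  then obtain W where "pB d a b = pB d (a mod 16) (b mod 16) + 64 * W"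
    by (simp del: pA_def pB_def) blast
  then show ?thesis by simp
qed

lemma int16_cases: "(r::int) \<in> {0..<16} \<Longrightarrow> r=0 \<or> r=1 \<or> r=2 \<or> r=3 \<or> r=4 \<or> r=5 \<or> r=6 \<or> r=7 \<or> r=8 \<or> r=9 \<or> r=10 \<or> r=11 \<or> r=12 \<or> r=13 \<or> r=14 \<or> r=15"
  by (simp, presburger)



lemma mod_eq_dvd: "(x::int) mod 64 = y mod 64 \<Longrightarrow> m dvd 64 \<Longrightarrow> x mod m = y mod m"
  by (metis mod_mod_cancel)

definition VFp :: "int \<Rightarrow> int \<Rightarrow> int \<Rightarrow> int \<Rightarrow> int \<Rightarrow> int \<Rightarrow> bool" where
  "VFp \<alpha> A B ov q a2 \<longleftrightarrow>
     B mod 4 = 0 \<and> A mod 4 = ov \<and> A mod 8 = (ov + 4*(1-ov)*q) mod 8 \<and> A mod 16 = (ov + 4*(1-ov)*q) mod 16 \<and>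
     (ov = 0 \<longrightarrow> B mod 16 = 0 \<and> A mod 64 = (16*(1-q)*a2 + q*\<alpha>) mod 64 \<and> (q = 0 \<longrightarrow> B mod 64 = 0))"

definition VFn :: "int \<Rightarrow> int \<Rightarrow> int \<Rightarrow> int \<Rightarrow> int \<Rightarrow> int \<Rightarrow> int \<Rightarrow> int \<Rightarrow> bool" where
  "VFn d \<alpha>0 \<alpha>1 A B ov q a2 \<longleftrightarrow>
     B mod 4 = 0 \<and> A mod 4 = ov \<and> A mod 8 = (ov + 4*(1-ov)*q) mod 8 \<and>
     A mod 16 = (ov + 8*ov*q + 4*(1-ov)*q) mod 16 \<and> (d*B) mod 16 = (8*ov*q) mod 16 \<and>
     (ov = 0 \<longrightarrow> B mod 16 = 0 \<and> A mod 64 = (16*(1-q)*a2 + q*(\<alpha>0 + (\<alpha>1-\<alpha>0)*a2)) mod 64 \<and>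
        (q = 0 \<longrightarrow> B mod 64 = 0) \<and> (d*B) mod 64 = (32*q*a2) mod 64)"

lemma m64: "((x::int) mod 64) mod 4 = x mod 4" "((x::int) mod 64) mod 8 = x mod 8"
  "((x::int) mod 64) mod 16 = x mod 16"
  by (simp_all add: mod_mod_cancel)

lemma VFp_mod: "VFp \<alpha> A B ov q a2 \<longleftrightarrow> VFp \<alpha> (A mod 64) (B mod 64) ov q a2"
  unfolding VFp_def by (simp only: m64 mod_mod_trivial)

lemma dm: "(d * (B mod 64)) mod 16 = (d*(B::int)) mod 16" "(d * (B mod 64)) mod 64 = (d*(B::int)) mod 64"
  apply (metis m64(3) mod_mult_right_eq)
  by (metis mod_mult_right_eq)

lemma VFn_mod: "VFn d \<alpha>0 \<alpha>1 A B ov q a2 \<longleftrightarrow> VFn d \<alpha>0 \<alpha>1 (A mod 64) (B mod 64) ov q a2"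
  unfolding VFn_def by (simp only: m64 mod_mod_trivial dm)
lemma mod2_16: "(a::int) mod 2 = (a mod 16) mod 2" by (simp add: mod_mod_cancel)
lemma div2_16: "((a::int) div 2) mod 2 = ((a mod 16) div 2) mod 2"
proof -
  have "a div 2 = (2 * (8 * (a div 16)) + a mod 16) div 2" by simp
  also have "\<dots> = 8 * (a div 16) + (a mod 16) div 2" by (metis add.commute div_mult_self2 zero_neq_numeral mult.commute)
  also have "\<dots> = 2 * (4 * (a div 16)) + (a mod 16) div 2" by simp
  finally show ?thesis by (metis mod_mult_self4)
qed

lemma VFp_red: "VFp \<alpha> (pA d a b) (pB d a b) (a mod 2) (b mod 2) ((a div 2) mod 2) \<longleftrightarrow>
   VFp \<alpha> (pA d (a mod 16) (b mod 16) mod 64) (pB d (a mod 16) (b mod 16) mod 64) ((a mod 16) mod 2) ((b mod 16) mod 2) (((a mod 16) div 2) mod 2)"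
  by (metis VFp_mod pA_mod pB_mod mod2_16 div2_16)
lemma VFn_red: "VFn d \<alpha>0 \<alpha>1 (pA d a b) (pB d a b) (a mod 2) (b mod 2) ((a div 2) mod 2) \<longleftrightarrow>
   VFn d \<alpha>0 \<alpha>1 (pA d (a mod 16) (b mod 16) mod 64) (pB d (a mod 16) (b mod 16) mod 64) ((a mod 16) mod 2) ((b mod 16) mod 2) (((a mod 16) div 2) mod 2)"
  by (metis VFn_mod pA_mod pB_mod mod2_16 div2_16)

lemma VF2: "VFp 4 (pA 2 a b) (pB 2 a b) (a mod 2) (b mod 2) ((a div 2) mod 2)"
proof -
  have r: "a mod 16 \<in> {0..<16}" "b mod 16 \<in> {0..<16}" by auto
  show ?thesis
    apply (subst VFp_red)
    using int16_cases[OF r(1)] int16_cases[OF r(2)]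
    apply (elim disjE)
    by (simp_all add: VFp_def pA_def pB_def)
qed
lemma VF10: "VFp 36 (pA 10 a b) (pB 10 a b) (a mod 2) (b mod 2) ((a div 2) mod 2)"
proof -
  have r: "a mod 16 \<in> {0..<16}" "b mod 16 \<in> {0..<16}" by auto
  show ?thesis
    apply (subst VFp_red)
    using int16_cases[OF r(1)] int16_cases[OF r(2)]
    apply (elim disjE)
    by (simp_all add: VFp_def pA_def pB_def)
qed

lemma VFm2: "VFn (-2) 4 36 (pA (-2) a b) (pB (-2) a b) (a mod 2) (b mod 2) ((a div 2) mod 2)"
proof -
  have r: "a mod 16 \<in> {0..<16}" "b mod 16 \<in> {0..<16}" by auto
  show ?thesis
    apply (subst VFn_red)
    using int16_cases[OF r(1)] int16_cases[OF r(2)]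
    apply (elim disjE)
    by (simp_all add: VFn_def pA_def pB_def)
qed

lemma VFm10: "VFn (-10) 36 4 (pA (-10) a b) (pB (-10) a b) (a mod 2) (b mod 2) ((a div 2) mod 2)"
proof -
  have r: "a mod 16 \<in> {0..<16}" "b mod 16 \<in> {0..<16}" by auto
  show ?thesis
    apply (subst VFn_red)
    using int16_cases[OF r(1)] int16_cases[OF r(2)]
    apply (elim disjE)
    by (simp_all add: VFn_def pA_def pB_def)
qed


lemma int7: "0 \<le> (x::int) \<Longrightarrow> x \<le> 6 \<Longrightarrow> x=0 \<or> x=1 \<or> x=2 \<or> x=3 \<or> x=4 \<or> x=5 \<or> x=6" by presburger
lemma e2: assumes "(S + 4*T) mod 8 = (0::int)" "0\<le>S" "0\<le>T" "S+T\<le>4" shows "S=0"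
proof -
  have s: "S=0 \<or> S=1 \<or> S=2 \<or> S=3 \<or> S=4 \<or> S=5 \<or> S=6" using assms by (intro int7) linarith+
  have t: "T=0 \<or> T=1 \<or> T=2 \<or> T=3 \<or> T=4 \<or> T=5 \<or> T=6" using assms by (intro int7) linarith+
  show ?thesis using s t assms by (elim disjE; simp)
qed
lemma e3: assumes "(S + 4*T) mod 16 = (0::int)" "S=0 \<or> S=4" "0\<le>T" "S+T\<le>6" shows "S=0"
proof -
  have t: "T=0 \<or> T=1 \<or> T=2 \<or> T=3 \<or> T=4 \<or> T=5 \<or> T=6" using assms by (intro int7) linarith+
  show ?thesis using t assms by (elim disjE; simp)
qed
lemma e45: assumes "\<alpha>=4 \<or> \<alpha>=36" "(16*Y + \<alpha>*Q) mod m = (0::int)" "m = 32 \<and> Y+Q\<le>4 \<or> m = 64 \<and> Y+Q \<le> 6" "0\<le>Y" "0\<le>Q" shows "Q=0"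
proof -
  have s: "Y=0 \<or> Y=1 \<or> Y=2 \<or> Y=3 \<or> Y=4 \<or> Y=5 \<or> Y=6" using assms by (intro int7) linarith+
  have t: "Q=0 \<or> Q=1 \<or> Q=2 \<or> Q=3 \<or> Q=4 \<or> Q=5 \<or> Q=6" using assms by (intro int7) linarith+
  show ?thesis using s t assms by (elim disjE; simp)
qed
lemma smc: assumes "\<And>i. i\<in>S \<Longrightarrow> (f i::int) mod m = g i mod m" shows "sum f S mod m = sum g S mod m"
proof -
  have "sum f S mod m = (\<Sum>i\<in>S. f i mod m) mod m" by (simp add: mod_sum_eq)
  also have "\<dots> = (\<Sum>i\<in>S. g i mod m) mod m" using assms by (simp cong: sum.cong)
  also have "\<dots> = sum g S mod m" by (simp add: mod_sum_eq)
  finally show ?thesis .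
qed
lemma sum_le_card: "finite S \<Longrightarrow> (\<And>i. i\<in>S \<Longrightarrow> (f i::int) \<le> 1) \<Longrightarrow> sum f S \<le> int (card S)"
  using sum_bounded_above[of S f 1] by simp
lemma sum_zero_each: "finite S \<Longrightarrow> (\<And>i. i\<in>S \<Longrightarrow> 0 \<le> (f i::int)) \<Longrightarrow> sum f S = 0 \<Longrightarrow> i \<in> S \<Longrightarrow> f i = 0"
  using sum_nonneg_eq_0_iff by blast
lemma mod_low: "(x::int) mod 64 = y mod 64 \<Longrightarrow> m dvd 64 \<Longrightarrow> x mod m = y mod m"
  by (metis mod_mod_cancel)
lemma mod_low0: "(x::int) mod 64 = 0 \<Longrightarrow> m dvd 64 \<Longrightarrow> x mod m = 0"
  by (metis mod_mod_cancel mod_0)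
lemma e1: "S mod 4 = (0::int) \<Longrightarrow> 0\<le>S \<Longrightarrow> S\<le>6 \<Longrightarrow> S=0 \<or> S=4" by presburger
lemma mod_sub: assumes "(X + Y) mod m = (0::int)" "X mod m = P mod m" "Y mod m = Q mod m"
  shows "(P + Q) mod m = 0"
proof -
  have "(P + Q) mod m = (P mod m + Q mod m) mod m" by (simp add: mod_add_eq)
  also have "\<dots> = (X mod m + Y mod m) mod m" using assms by simp
  also have "\<dots> = (X+Y) mod m" by (simp add: mod_add_eq)
  finally show ?thesis using assms by simp
qed
lemma dmul: "d = 2 \<or> d = 10 \<or> d = -2 \<or> d = -10 \<Longrightarrow> (Y::int) mod 4 = 0 \<Longrightarrow> (d*Y) mod 8 = 0"
  by (elim disjE; simp; presburger)
lemma dmul16: "d = 2 \<or> d = 10 \<or> d = -2 \<or> d = -10 \<Longrightarrow> (Y::int) mod 16 = 0 \<Longrightarrow> (d*Y) mod 32 = 0"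
  by (elim disjE; simp; presburger)
lemma b01: "0 \<le> (x::int) \<Longrightarrow> x \<le> 1 \<Longrightarrow> x = 0 \<or> x = 1" by arith

lemma stage_pos:
  fixes A B ov q a2 :: "nat \<Rightarrow> int" and d \<alpha> :: int
  assumes dd: "d = 2 \<or> d = 10" and al: "\<alpha> = 4 \<or> \<alpha> = 36"
  and V: "\<And>i. VFp \<alpha> (A i) (B i) (ov i) (q i) (a2 i)"
  and bo: "\<And>i. 0 \<le> ov i \<and> ov i \<le> 1" and bq: "\<And>i. 0 \<le> q i \<and> q i \<le> 1" and ba: "\<And>i. 0 \<le> a2 i \<and> a2 i \<le> 1"
  and F1: "(sum A {0..3} + d * sum B {4..9}) mod 64 = 0"
  and F2: "(sum B {0..3} + sum A {4..9}) mod 64 = 0"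
  shows "\<forall>i\<in>{0..3}\<union>{4..9}. ov i = 0 \<and> q i = 0"
proof -
  define G where "G = {0..3::nat}"
  define H where "H = {4..9::nat}"
  have fG: "finite G" "card G = 4" and fH: "finite H" "card H = 6" by (simp_all add: G_def H_def)
  note F1' = F1[folded G_def H_def] and F2' = F2[folded G_def H_def]
  have V1: "\<And>i. B i mod 4 = 0"     and V3: "\<And>i. A i mod 8 = (ov i + 4*((1-ov i)*q i)) mod 8"
    and V4: "\<And>i. A i mod 16 = (ov i + 4*((1-ov i)*q i)) mod 16"
    and V5: "\<And>i. ov i = 0 \<Longrightarrow> B i mod 16 = 0"
    and V6: "\<And>i. ov i = 0 \<Longrightarrow> A i mod 64 = (16*((1-q i)*a2 i) + \<alpha> * q i) mod 64"
    and V7: "\<And>i. ov i = 0 \<Longrightarrow> q i = 0 \<Longrightarrow> B i mod 64 = 0"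
    using V unfolding VFp_def by (auto simp: algebra_simps)
  have V2: "\<And>i. A i mod 4 = ov i mod 4"
  proof -
    fix i
    have "A i mod 4 = ov i" using V[of i] unfolding VFp_def by simp
    moreover have "ov i mod 4 = ov i" using bo[of i] by simp
    ultimately show "A i mod 4 = ov i mod 4" by simp
  qed
  have bt: "\<And>i. 0 \<le> (1-ov i)*q i \<and> ov i + (1-ov i)*q i \<le> 1"
  proof -
    fix i
    have "ov i = 0 \<or> ov i = 1" "q i = 0 \<or> q i = 1" using b01 bo bq by blast+
    then show "0 \<le> (1-ov i)*q i \<and> ov i + (1-ov i)*q i \<le> 1" by auto
  qed
  have by2: "\<And>i. 0 \<le> (1-q i)*a2 i \<and> (1-q i)*a2 i + q i \<le> 1"
  proof -
    fix i
    have "a2 i = 0 \<or> a2 i = 1" "q i = 0 \<or> q i = 1" using b01 ba bq by blast+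
    then show "0 \<le> (1-q i)*a2 i \<and> (1-q i)*a2 i + q i \<le> 1" by auto
  qed
  have "sum B G mod 4 = sum (\<lambda>_. 0) G mod 4" by (rule smc) (simp add: V1)
  then have s1a: "sum B G mod 4 = 0 mod 4" by simp
  have s1b: "sum A H mod 4 = sum ov H mod 4" by (rule smc) (simp add: V2)
  have "(sum B G + sum A H) mod 4 = 0" using mod_low0[OF F2', of 4] by simp
  from mod_sub[OF this s1a s1b] have "sum ov H mod 4 = 0" by simp
  moreover have "0 \<le> sum ov H" "sum ov H \<le> 6"
    using bo sum_le_card[OF fH(1), of ov] fH(2) by (auto intro: sum_nonneg)
  ultimately have SH: "sum ov H = 0 \<or> sum ov H = 4" by (rule e1)
  have "sum A G mod 8 = sum (\<lambda>i. ov i + 4*((1-ov i)*q i)) G mod 8" by (rule smc) (simp add: V3)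
  also have "sum (\<lambda>i. ov i + 4*((1-ov i)*q i)) G = sum ov G + 4 * sum (\<lambda>i. (1-ov i)*q i) G"
    by (simp add: sum.distrib sum_distrib_left)
  finally have s2a: "sum A G mod 8 = (sum ov G + 4 * sum (\<lambda>i. (1-ov i)*q i) G) mod 8" .
  have "sum B H mod 4 = sum (\<lambda>_. 0) H mod 4" by (rule smc) (simp add: V1)
  then have "(d * sum B H) mod 8 = 0" using dmul dd by auto
  then have s2b: "(d * sum B H) mod 8 = 0 mod 8" by simp
  have "(sum A G + d * sum B H) mod 8 = 0" using mod_low0[OF F1', of 8] by simp
  from mod_sub[OF this s2a s2b] have "(sum ov G + 4 * sum (\<lambda>i. (1-ov i)*q i) G) mod 8 = 0" by simp
  moreover have "0 \<le> sum ov G" "0 \<le> sum (\<lambda>i. (1-ov i)*q i) G"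
    using bo bt by (auto intro: sum_nonneg)
  moreover have "sum ov G + sum (\<lambda>i. (1-ov i)*q i) G \<le> 4"
    using sum_le_card[OF fG(1), of "\<lambda>i. ov i + (1-ov i)*q i"] fG(2) bt by (simp add: sum.distrib)
  ultimately have "sum ov G = 0" by (rule e2)
  then have oG: "\<And>i. i \<in> G \<Longrightarrow> ov i = 0" using sum_zero_each[OF fG(1), of ov] bo by blast
  have "sum B G mod 16 = sum (\<lambda>_. 0) G mod 16" by (rule smc) (simp add: V5 oG)
  then have s3a: "sum B G mod 16 = 0 mod 16" by simp
  have "sum A H mod 16 = sum (\<lambda>i. ov i + 4*((1-ov i)*q i)) H mod 16" by (rule smc) (simp add: V4)
  also have "sum (\<lambda>i. ov i + 4*((1-ov i)*q i)) H = sum ov H + 4 * sum (\<lambda>i. (1-ov i)*q i) H"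
    by (simp add: sum.distrib sum_distrib_left)
  finally have s3b: "sum A H mod 16 = (sum ov H + 4 * sum (\<lambda>i. (1-ov i)*q i) H) mod 16" .
  have "(sum B G + sum A H) mod 16 = 0" using mod_low0[OF F2', of 16] by simp
  from mod_sub[OF this s3a s3b] have m3: "(sum ov H + 4 * sum (\<lambda>i. (1-ov i)*q i) H) mod 16 = 0" by simp
  have n3: "0 \<le> sum (\<lambda>i. (1-ov i)*q i) H"
    using bt by (auto intro: sum_nonneg)
  have b3: "sum ov H + sum (\<lambda>i. (1-ov i)*q i) H \<le> 6"
    using sum_le_card[OF fH(1), of "\<lambda>i. ov i + (1-ov i)*q i"] fH(2) bt by (simp add: sum.distrib)
  have "sum ov H = 0" by (rule e3[OF m3 SH n3 b3])
  then have oH: "\<And>i. i \<in> H \<Longrightarrow> ov i = 0" using sum_zero_each[OF fH(1), of ov] bo by blast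
  have "sum A G mod 64 = sum (\<lambda>i. 16*((1-q i)*a2 i) + \<alpha> * q i) G mod 64" by (rule smc) (simp add: V6 oG)
  also have "sum (\<lambda>i. 16*((1-q i)*a2 i) + \<alpha> * q i) G = 16 * sum (\<lambda>i. (1-q i)*a2 i) G + \<alpha> * sum q G"
    by (simp add: sum.distrib sum_distrib_left)
  finally have "sum A G mod 64 = (16 * sum (\<lambda>i. (1-q i)*a2 i) G + \<alpha> * sum q G) mod 64" .
  then have s4a: "sum A G mod 32 = (16 * sum (\<lambda>i. (1-q i)*a2 i) G + \<alpha> * sum q G) mod 32" by (rule mod_low) simp
  have "sum B H mod 16 = sum (\<lambda>_. 0) H mod 16" by (rule smc) (simp add: V5 oH)
  then have "(d * sum B H) mod 32 = 0" using dmul16 dd by auto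
  then have s4b: "(d * sum B H) mod 32 = 0 mod 32" by simp
  have "(sum A G + d * sum B H) mod 32 = 0" using mod_low0[OF F1', of 32] by simp
  from mod_sub[OF this s4a s4b] have m4: "(16 * sum (\<lambda>i. (1-q i)*a2 i) G + \<alpha> * sum q G) mod 32 = 0" by simp
  have n4: "0 \<le> sum (\<lambda>i. (1-q i)*a2 i) G" "0 \<le> sum q G" using by2 bq by (auto intro: sum_nonneg)
  have b4: "sum (\<lambda>i. (1-q i)*a2 i) G + sum q G \<le> 4"
    using sum_le_card[OF fG(1), of "\<lambda>i. (1-q i)*a2 i + q i"] fG(2) by2 by (simp add: sum.distrib)
  have "sum q G = 0" by (rule e45[OF al m4 _ n4]) (use b4 in simp)
  then have qG: "\<And>i. i \<in> G \<Longrightarrow> q i = 0" using sum_zero_each[OF fG(1), of q] bq by blast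
  have "sum B G mod 64 = sum (\<lambda>_. 0) G mod 64" by (rule smc) (simp add: V7 oG qG)
  then have s5a: "sum B G mod 64 = 0 mod 64" by simp
  have "sum A H mod 64 = sum (\<lambda>i. 16*((1-q i)*a2 i) + \<alpha> * q i) H mod 64" by (rule smc) (simp add: V6 oH)
  also have "sum (\<lambda>i. 16*((1-q i)*a2 i) + \<alpha> * q i) H = 16 * sum (\<lambda>i. (1-q i)*a2 i) H + \<alpha> * sum q H"
    by (simp add: sum.distrib sum_distrib_left)
  finally have s5b: "sum A H mod 64 = (16 * sum (\<lambda>i. (1-q i)*a2 i) H + \<alpha> * sum q H) mod 64" .
  from mod_sub[OF F2' s5a s5b] have m5: "(16 * sum (\<lambda>i. (1-q i)*a2 i) H + \<alpha> * sum q H) mod 64 = 0" by simp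
  have n5: "0 \<le> sum (\<lambda>i. (1-q i)*a2 i) H" "0 \<le> sum q H" using by2 bq by (auto intro: sum_nonneg)
  have b5: "sum (\<lambda>i. (1-q i)*a2 i) H + sum q H \<le> 6"
    using sum_le_card[OF fH(1), of "\<lambda>i. (1-q i)*a2 i + q i"] fH(2) by2 by (simp add: sum.distrib)
  have "sum q H = 0" by (rule e45[OF al m5 _ n5]) (use b5 in simp)
  then have qH: "\<And>i. i \<in> H \<Longrightarrow> q i = 0" using sum_zero_each[OF fH(1), of q] bq by blast
  show ?thesis using oG oH qG qH unfolding G_def H_def by blast
qed
lemma mod_add0: "(a::int) mod m = 0 \<Longrightarrow> b mod m = 0 \<Longrightarrow> (a+b) mod m = 0"
  by (metis mod_add_eq add_0 mod_0)
lemma mod_mult0: "(b::int) mod m = 0 \<Longrightarrow> (d*b) mod m = 0"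
  by (metis mod_mult_right_eq mult_zero_right mod_0)
lemma mod_add_r0: "(a::int) mod m = p mod m \<Longrightarrow> b mod m = 0 \<Longrightarrow> (a + b) mod m = p mod m"
  by (metis mod_add_eq add_0_right mod_mod_trivial)
lemma mod_add_r: "(a::int) mod m = p mod m \<Longrightarrow> b mod m = r mod m \<Longrightarrow> (a + b) mod m = (p + r) mod m"
  by (metis mod_add_eq)
lemma dm8: "d = -2 \<or> d = -10 \<Longrightarrow> S=0 \<or> S=4 \<Longrightarrow> (Y::int) mod 8 = (S + 4*T) mod 8 \<Longrightarrow> (d*Y) mod 8 = 0"
  by (elim disjE; simp; presburger)
lemma e3n: assumes "(8*V + (S + 8*V + 4*T)) mod 16 = (0::int)" "S=0 \<or> S=4" "0\<le>T" "S+T\<le>6" shows "S=0"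
proof -
  have "8*V + (S + 8*V + 4*T) = (S + 4*T) + 16 * V" by simp
  then have "(S + 4*T) mod 16 = 0" using assms(1) by simp
  then show ?thesis by (rule e3[OF _ assms(2-4)])
qed
lemma m16_4: "(4 * Q) mod 16 = (0::int) \<Longrightarrow> Q mod 4 = 0" by presburger
lemma a32: "a1 - a0 = 32 \<or> a1 - a0 = -32 \<Longrightarrow> (X + (a1-a0)*(Z::int)) mod 32 = X mod 32"
proof -
  assume "a1 - a0 = 32 \<or> a1 - a0 = -32"
  then show ?thesis
  proof
    assume h: "a1 - a0 = 32" show ?thesis unfolding h by simp
  next
    assume h: "a1 - a0 = -32"
    have "X + -32 * Z = X + 32 * (- Z)" by simp
    then show ?thesis unfolding h by (metis mod_mult_self2)
  qed
qed
lemma a64: "a1 - a0 = 32 \<or> a1 - a0 = -32 \<Longrightarrow> (32*Z + (X + (a1-a0)*(Z::int))) mod 64 = X mod 64"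
proof -
  assume "a1 - a0 = 32 \<or> a1 - a0 = -32"
  then show ?thesis
  proof
    assume h: "a1 - a0 = 32"
    have "32*Z + (X + 32*Z) = X + 64 * Z" by simp
    then show ?thesis unfolding h by simp
  next
    assume h: "a1 - a0 = -32" show ?thesis unfolding h by simp
  qed
qed

lemma stage_neg:
  fixes A B ov q a2 :: "nat \<Rightarrow> int" and d \<alpha>0 \<alpha>1 :: int
  assumes dd: "d = -2 \<or> d = -10" and al: "\<alpha>0 = 4 \<and> \<alpha>1 = 36 \<or> \<alpha>0 = 36 \<and> \<alpha>1 = 4"
  and V: "\<And>i. VFn d \<alpha>0 \<alpha>1 (A i) (B i) (ov i) (q i) (a2 i)"
  and bo: "\<And>i. 0 \<le> ov i \<and> ov i \<le> 1" and bq: "\<And>i. 0 \<le> q i \<and> q i \<le> 1" and ba: "\<And>i. 0 \<le> a2 i \<and> a2 i \<le> 1"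
  and F1: "(sum A {0..3} + d * sum A {4..9} + d * sum B {4..9}) mod 64 = 0"
  and F2: "(sum B {0..3} + d * sum B {4..9} + sum A {4..9}) mod 64 = 0"
  shows "\<forall>i\<in>{0..3}\<union>{4..9}. ov i = 0 \<and> q i = 0"
proof -
  define G where "G = {0..3::nat}"
  define H where "H = {4..9::nat}"
  have fG: "finite G" "card G = 4" and fH: "finite H" "card H = 6" by (simp_all add: G_def H_def)
  note F1' = F1[folded G_def H_def] and F2' = F2[folded G_def H_def]
  have al0: "\<alpha>0 = 4 \<or> \<alpha>0 = 36" and al1: "\<alpha>1 - \<alpha>0 = 32 \<or> \<alpha>1 - \<alpha>0 = -32" using al by auto
  have dd': "d = 2 \<or> d = 10 \<or> d = -2 \<or> d = -10" using dd by auto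
  have V1: "\<And>i. B i mod 4 = 0"
    and V3: "\<And>i. A i mod 8 = (ov i + 4*((1-ov i)*q i)) mod 8"
    and V4: "\<And>i. A i mod 16 = (ov i + 8*(ov i*q i) + 4*((1-ov i)*q i)) mod 16"
    and V4b: "\<And>i. (d * B i) mod 16 = (8*(ov i*q i)) mod 16"
    and V5: "\<And>i. ov i = 0 \<Longrightarrow> B i mod 16 = 0"
    and V6: "\<And>i. ov i = 0 \<Longrightarrow> A i mod 64 = (16*((1-q i)*a2 i) + \<alpha>0 * q i + (\<alpha>1-\<alpha>0)*(q i*a2 i)) mod 64"
    and V7: "\<And>i. ov i = 0 \<Longrightarrow> q i = 0 \<Longrightarrow> B i mod 64 = 0"
    and V8: "\<And>i. ov i = 0 \<Longrightarrow> (d * B i) mod 64 = (32*(q i*a2 i)) mod 64"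
    using V unfolding VFn_def by (auto simp: algebra_simps)
  have V2: "\<And>i. A i mod 4 = ov i mod 4"
  proof -
    fix i
    have "A i mod 4 = ov i" using V[of i] unfolding VFn_def by simp
    moreover have "ov i mod 4 = ov i" using bo[of i] by simp
    ultimately show "A i mod 4 = ov i mod 4" by simp
  qed
  have bt: "\<And>i. 0 \<le> (1-ov i)*q i \<and> ov i + (1-ov i)*q i \<le> 1"
  proof -
    fix i
    have "ov i = 0 \<or> ov i = 1" "q i = 0 \<or> q i = 1" using b01 bo bq by blast+
    then show "0 \<le> (1-ov i)*q i \<and> ov i + (1-ov i)*q i \<le> 1" by auto
  qed
  have by2: "\<And>i. 0 \<le> (1-q i)*a2 i \<and> (1-q i)*a2 i + q i \<le> 1"
  proof -
    fix i
    have "a2 i = 0 \<or> a2 i = 1" "q i = 0 \<or> q i = 1" using b01 ba bq by blast+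
    then show "0 \<le> (1-q i)*a2 i \<and> (1-q i)*a2 i + q i \<le> 1" by auto
  qed
  have "sum B G mod 4 = sum (\<lambda>_. 0) G mod 4" by (rule smc) (simp add: V1)
  then have z1: "sum B G mod 4 = 0" by simp
  have "sum B H mod 4 = sum (\<lambda>_. 0) H mod 4" by (rule smc) (simp add: V1)
  then have z2: "sum B H mod 4 = 0" by simp
  have s1a: "(sum B G + d * sum B H) mod 4 = 0 mod 4" using mod_add0[OF z1 mod_mult0[OF z2]] by simp
  have s1b: "sum A H mod 4 = sum ov H mod 4" by (rule smc) (simp add: V2)
  have "(sum B G + d * sum B H + sum A H) mod 4 = 0" using mod_low0[OF F2', of 4] by simp
  from mod_sub[OF this s1a s1b] have "sum ov H mod 4 = 0" by simp
  moreover have "0 \<le> sum ov H" "sum ov H \<le> 6"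
    using bo sum_le_card[OF fH(1), of ov] fH(2) by (auto intro: sum_nonneg)
  ultimately have SH: "sum ov H = 0 \<or> sum ov H = 4" by (rule e1)
  have "sum A G mod 8 = sum (\<lambda>i. ov i + 4*((1-ov i)*q i)) G mod 8" by (rule smc) (simp add: V3)
  also have "sum (\<lambda>i. ov i + 4*((1-ov i)*q i)) G = sum ov G + 4 * sum (\<lambda>i. (1-ov i)*q i) G"
    by (simp add: sum.distrib sum_distrib_left)
  finally have s2a: "sum A G mod 8 = (sum ov G + 4 * sum (\<lambda>i. (1-ov i)*q i) G) mod 8" .
  have "sum A H mod 8 = sum (\<lambda>i. ov i + 4*((1-ov i)*q i)) H mod 8" by (rule smc) (simp add: V3)
  also have "sum (\<lambda>i. ov i + 4*((1-ov i)*q i)) H = sum ov H + 4 * sum (\<lambda>i. (1-ov i)*q i) H"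
    by (simp add: sum.distrib sum_distrib_left)
  finally have "sum A H mod 8 = (sum ov H + 4 * sum (\<lambda>i. (1-ov i)*q i) H) mod 8" .
  then have s2c: "(d * sum A H) mod 8 = 0" by (rule dm8[OF dd SH])
  have s2a': "(sum A G + d * sum A H) mod 8 = (sum ov G + 4 * sum (\<lambda>i. (1-ov i)*q i) G) mod 8"
    by (rule mod_add_r0[OF s2a s2c])
  have "(d * sum B H) mod 8 = 0" using dmul[OF dd' z2] .
  then have s2b: "(d * sum B H) mod 8 = 0 mod 8" by simp
  have "(sum A G + d * sum A H + d * sum B H) mod 8 = 0" using mod_low0[OF F1', of 8] by simp
  from mod_sub[OF this s2a' s2b] have m2: "(sum ov G + 4 * sum (\<lambda>i. (1-ov i)*q i) G) mod 8 = 0" by simp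
  have "0 \<le> sum ov G" "0 \<le> sum (\<lambda>i. (1-ov i)*q i) G"
    using bo bt by (auto intro: sum_nonneg)
  moreover have "sum ov G + sum (\<lambda>i. (1-ov i)*q i) G \<le> 4"
    using sum_le_card[OF fG(1), of "\<lambda>i. ov i + (1-ov i)*q i"] fG(2) bt by (simp add: sum.distrib)
  ultimately have "sum ov G = 0" using e2[OF m2] by blast
  then have oG: "\<And>i. i \<in> G \<Longrightarrow> ov i = 0" using sum_zero_each[OF fG(1), of ov] bo by blast
  have "sum B G mod 16 = sum (\<lambda>_. 0) G mod 16" by (rule smc) (simp add: V5 oG)
  then have z3: "sum B G mod 16 = 0 mod 16" by simp
  have "(d * sum B H) mod 16 = sum (\<lambda>i. d * B i) H mod 16" by (simp add: sum_distrib_left)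
  also have "\<dots> = sum (\<lambda>i. 8*(ov i*q i)) H mod 16" by (rule smc) (simp add: V4b)
  also have "sum (\<lambda>i. 8*(ov i*q i)) H = 8 * sum (\<lambda>i. ov i*q i) H" by (simp add: sum_distrib_left)
  finally have z4: "(d * sum B H) mod 16 = (8 * sum (\<lambda>i. ov i*q i) H) mod 16" .
  have s3a: "(sum B G + d * sum B H) mod 16 = (0 + 8 * sum (\<lambda>i. ov i*q i) H) mod 16"
    by (rule mod_add_r[OF z3 z4])
  have "sum A H mod 16 = sum (\<lambda>i. ov i + 8*(ov i*q i) + 4*((1-ov i)*q i)) H mod 16" by (rule smc) (simp add: V4)
  also have "sum (\<lambda>i. ov i + 8*(ov i*q i) + 4*((1-ov i)*q i)) H = sum ov H + 8 * sum (\<lambda>i. ov i*q i) H + 4 * sum (\<lambda>i. (1-ov i)*q i) H"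
    by (simp add: sum.distrib sum_distrib_left)
  finally have s3b: "sum A H mod 16 = (sum ov H + 8 * sum (\<lambda>i. ov i*q i) H + 4 * sum (\<lambda>i. (1-ov i)*q i) H) mod 16" .
  have "(sum B G + d * sum B H + sum A H) mod 16 = 0" using mod_low0[OF F2', of 16] by simp
  from mod_sub[OF this s3a s3b] have m3: "(8 * sum (\<lambda>i. ov i*q i) H + (sum ov H + 8 * sum (\<lambda>i. ov i*q i) H + 4 * sum (\<lambda>i. (1-ov i)*q i) H)) mod 16 = 0" by simp
  have n3: "0 \<le> sum (\<lambda>i. (1-ov i)*q i) H"
    using bt by (auto intro: sum_nonneg)
  have b3: "sum ov H + sum (\<lambda>i. (1-ov i)*q i) H \<le> 6"
    using sum_le_card[OF fH(1), of "\<lambda>i. ov i + (1-ov i)*q i"] fH(2) bt by (simp add: sum.distrib)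
  have SH0: "sum ov H = 0" by (rule e3n[OF m3 SH n3 b3])
  then have oH: "\<And>i. i \<in> H \<Longrightarrow> ov i = 0" using sum_zero_each[OF fH(1), of ov] bo by blast
  have e_ovq: "sum (\<lambda>i. ov i*q i) H = 0" "sum (\<lambda>i. (1-ov i)*q i) H = sum q H" using oH by (simp_all cong: sum.cong)
  have "(4 * sum q H) mod 16 = 0" using m3 SH0 e_ovq by simp
  then have qH4: "sum q H mod 4 = 0" by (rule m16_4)
  have "sum A G mod 64 = sum (\<lambda>i. 16*((1-q i)*a2 i) + \<alpha>0 * q i + (\<alpha>1-\<alpha>0)*(q i*a2 i)) G mod 64" by (rule smc) (simp add: V6 oG)
  also have "sum (\<lambda>i. 16*((1-q i)*a2 i) + \<alpha>0 * q i + (\<alpha>1-\<alpha>0)*(q i*a2 i)) G = 16 * sum (\<lambda>i. (1-q i)*a2 i) G + \<alpha>0 * sum q G + (\<alpha>1-\<alpha>0) * sum (\<lambda>i. q i*a2 i) G"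
    by (simp add: sum.distrib sum_distrib_left)
  finally have "sum A G mod 64 = (16 * sum (\<lambda>i. (1-q i)*a2 i) G + \<alpha>0 * sum q G + (\<alpha>1-\<alpha>0) * sum (\<lambda>i. q i*a2 i) G) mod 64" .
  then have "sum A G mod 32 = (16 * sum (\<lambda>i. (1-q i)*a2 i) G + \<alpha>0 * sum q G + (\<alpha>1-\<alpha>0) * sum (\<lambda>i. q i*a2 i) G) mod 32" by (rule mod_low) simp
  also have "\<dots> = (16 * sum (\<lambda>i. (1-q i)*a2 i) G + \<alpha>0 * sum q G) mod 32" by (rule a32[OF al1])
  finally have s4a: "sum A G mod 32 = (16 * sum (\<lambda>i. (1-q i)*a2 i) G + \<alpha>0 * sum q G) mod 32" .
  have "sum A H mod 16 = sum (\<lambda>i. 4 * q i) H mod 16" by (rule smc) (simp add: V4 oH)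
  also have "sum (\<lambda>i. 4 * q i) H = 4 * sum q H" by (simp add: sum_distrib_left)
  finally have "sum A H mod 16 = 0" using qH4 by (simp, presburger)
  then have s4c: "(d * sum A H) mod 32 = 0" by (rule dmul16[OF dd'])
  have "sum B H mod 16 = sum (\<lambda>_. 0) H mod 16" by (rule smc) (simp add: V5 oH)
  then have "(d * sum B H) mod 32 = 0" using dmul16[OF dd'] by simp
  then have s4b: "(d * sum B H) mod 32 = 0 mod 32" by simp
  have s4a': "(sum A G + d * sum A H) mod 32 = (16 * sum (\<lambda>i. (1-q i)*a2 i) G + \<alpha>0 * sum q G) mod 32"
    by (rule mod_add_r0[OF s4a s4c])
  have "(sum A G + d * sum A H + d * sum B H) mod 32 = 0" using mod_low0[OF F1', of 32] by simp
  from mod_sub[OF this s4a' s4b] have m4: "(16 * sum (\<lambda>i. (1-q i)*a2 i) G + \<alpha>0 * sum q G) mod 32 = 0" by simp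
  have n4: "0 \<le> sum (\<lambda>i. (1-q i)*a2 i) G" "0 \<le> sum q G" using by2 bq by (auto intro: sum_nonneg)
  have b4: "sum (\<lambda>i. (1-q i)*a2 i) G + sum q G \<le> 4"
    using sum_le_card[OF fG(1), of "\<lambda>i. (1-q i)*a2 i + q i"] fG(2) by2 by (simp add: sum.distrib)
  have "sum q G = 0" by (rule e45[OF al0 m4 _ n4]) (use b4 in simp)
  then have qG: "\<And>i. i \<in> G \<Longrightarrow> q i = 0" using sum_zero_each[OF fG(1), of q] bq by blast
  have "sum B G mod 64 = sum (\<lambda>_. 0) G mod 64" by (rule smc) (simp add: V7 oG qG)
  then have z5: "sum B G mod 64 = 0 mod 64" by simp
  have "(d * sum B H) mod 64 = sum (\<lambda>i. d * B i) H mod 64" by (simp add: sum_distrib_left)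
  also have "\<dots> = sum (\<lambda>i. 32*(q i*a2 i)) H mod 64" by (rule smc) (simp add: V8 oH)
  also have "sum (\<lambda>i. 32*(q i*a2 i)) H = 32 * sum (\<lambda>i. q i*a2 i) H" by (simp add: sum_distrib_left)
  finally have z6: "(d * sum B H) mod 64 = (32 * sum (\<lambda>i. q i*a2 i) H) mod 64" .
  have s5a: "(sum B G + d * sum B H) mod 64 = (0 + 32 * sum (\<lambda>i. q i*a2 i) H) mod 64"
    by (rule mod_add_r[OF z5 z6])
  have "sum A H mod 64 = sum (\<lambda>i. 16*((1-q i)*a2 i) + \<alpha>0 * q i + (\<alpha>1-\<alpha>0)*(q i*a2 i)) H mod 64" by (rule smc) (simp add: V6 oH)
  also have "sum (\<lambda>i. 16*((1-q i)*a2 i) + \<alpha>0 * q i + (\<alpha>1-\<alpha>0)*(q i*a2 i)) H = (16 * sum (\<lambda>i. (1-q i)*a2 i) H + \<alpha>0 * sum q H) + (\<alpha>1-\<alpha>0) * sum (\<lambda>i. q i*a2 i) H"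
    by (simp add: sum.distrib sum_distrib_left)
  finally have s5b: "sum A H mod 64 = ((16 * sum (\<lambda>i. (1-q i)*a2 i) H + \<alpha>0 * sum q H) + (\<alpha>1-\<alpha>0) * sum (\<lambda>i. q i*a2 i) H) mod 64" .
  from mod_sub[OF F2' s5a s5b] have "(32 * sum (\<lambda>i. q i*a2 i) H + ((16 * sum (\<lambda>i. (1-q i)*a2 i) H + \<alpha>0 * sum q H) + (\<alpha>1-\<alpha>0) * sum (\<lambda>i. q i*a2 i) H)) mod 64 = 0" by simp
  then have m5: "(16 * sum (\<lambda>i. (1-q i)*a2 i) H + \<alpha>0 * sum q H) mod 64 = 0" using a64[OF al1] by simp
  have n5: "0 \<le> sum (\<lambda>i. (1-q i)*a2 i) H" "0 \<le> sum q H" using by2 bq by (auto intro: sum_nonneg)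
  have b5: "sum (\<lambda>i. (1-q i)*a2 i) H + sum q H \<le> 6"
    using sum_le_card[OF fH(1), of "\<lambda>i. (1-q i)*a2 i + q i"] fH(2) by2 by (simp add: sum.distrib)
  have "sum q H = 0" by (rule e45[OF al0 m5 _ n5]) (use b5 in simp)
  then have qH: "\<And>i. i \<in> H \<Longrightarrow> q i = 0" using sum_zero_each[OF fH(1), of q] bq by blast
  show ?thesis using oG oH qG qH unfolding G_def H_def by blast
qed



lemma v2_frac:
  assumes a: "(a::int) \<noteq> 0" and b: "b > 0"
  shows "v2 (of_int a / of_int b) = int (multiplicity 2 a) - int (multiplicity 2 b)"
proof -
  obtain n m where qm: "quotient_of (of_int a / of_int b) = (n, m)" by (cases "quotient_of (of_int a / of_int b)")
  have m: "m > 0" using quotient_of_denom_pos[OF qm] .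
  have eq: "(of_int a / of_int b :: rat) = of_int n / of_int m" using quotient_of_div[OF qm] .
  have "of_int a * of_int m = (of_int n * of_int b :: rat)" using eq b m
    by (simp add: field_simps)
  then have ab: "a * m = n * b" by (metis of_int_eq_iff of_int_mult)
  have n: "n \<noteq> 0" using ab a m b by auto
  have p2: "prime_elem (2::int)" by simp
  have "multiplicity 2 (a*m) = multiplicity 2 (n*b)" using ab by simp
  then have "multiplicity 2 a + multiplicity (2::int) m = multiplicity 2 n + multiplicity 2 b"
    using prime_elem_multiplicity_mult_distrib[OF p2] a n m b by simp
  then show ?thesis unfolding v2_def qm by simp
qed

lemma v2_mult:
  assumes p: "(p::rat) \<noteq> 0" and q: "q \<noteq> 0"
  shows "v2 (p * q) = v2 p + v2 q"
proof -
  obtain a b where ab: "quotient_of p = (a, b)" by (cases "quotient_of p")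
  obtain c e where ce: "quotient_of q = (c, e)" by (cases "quotient_of q")
  have b: "b > 0" and e: "e > 0" using quotient_of_denom_pos ab ce by blast+
  have pe: "p = of_int a / of_int b" and qe: "q = of_int c / of_int e" using quotient_of_div ab ce by blast+
  have a: "a \<noteq> 0" and c: "c \<noteq> 0" using p q pe qe by auto
  have "p * q = of_int (a*c) / of_int (b*e)" using pe qe by simp
  then have "v2 (p*q) = int (multiplicity 2 (a*c)) - int (multiplicity 2 (b*e))"
    using v2_frac[of "a*c" "b*e"] a c b e by simp
  also have "\<dots> = (int (multiplicity 2 a) - int (multiplicity 2 b)) + (int (multiplicity 2 c) - int (multiplicity 2 e))"
    using prime_elem_multiplicity_mult_distrib[of "2::int"] a c b e by simp
  also have "\<dots> = v2 p + v2 q"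
    using v2_frac[OF a b] v2_frac[OF c e] pe qe by simp
  finally show ?thesis .
qed

lemma abs2_mult: "abs2 (p * q) = abs2 p * abs2 q"
proof (cases "p = 0 \<or> q = 0")
  case True then show ?thesis by (auto simp: abs2_def)
next
  case False
  then show ?thesis by (simp add: abs2_def v2_mult powr_add[symmetric] algebra_simps)
qed

lemma abs2_nonneg: "abs2 p \<ge> 0" by (simp add: abs2_def)
lemma abs2_pos: "p \<noteq> 0 \<Longrightarrow> abs2 p > 0" by (simp add: abs2_def)
lemma abs2_zero: "abs2 0 = 0" by (simp add: abs2_def)

lemma abs2_int: "n \<noteq> 0 \<Longrightarrow> abs2 (of_int n) = 2 powr (- real (multiplicity 2 n))"
  using v2_frac[of n 1] by (simp add: abs2_def)

lemma abs2_int_le1: "abs2 (of_int n) \<le> 1"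
proof (cases "n = 0")
  case True then show ?thesis by (simp add: abs2_zero)
next
  case False
  have "(2::real) powr (- real (multiplicity 2 n)) \<le> 2 powr 0" by (intro powr_mono) auto
  then show ?thesis using abs2_int[OF False] by simp
qed

lemma abs2_int_64: assumes "\<not> 64 dvd n" shows "abs2 (of_int n) \<ge> 1/32"
proof -
  have n: "n \<noteq> 0" using assms by auto
  have "\<not> (2::int)^6 dvd n" using assms by simp
  then have "multiplicity 2 n < 6" using multiplicity_lessI[of n 2 6] n by simp
  then have "real (multiplicity 2 n) \<le> 5" by simp
  then have "2 powr (- real (multiplicity 2 n)) \<ge> 2 powr (-5)" by (intro powr_mono) auto
  moreover have "(2::real) powr (-5) = 1/32" by (simp add: powr_minus powr_realpow)
  ultimately show ?thesis using abs2_int[OF n] by simp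
qed

lemma abs2_two: "abs2 2 = 1/2"
  using abs2_int[of 2] by (simp add: powr_minus)

lemma abs2_one: "abs2 1 = 1"
  using abs2_int[of 1] by simp

lemma abs2_pow: "abs2 (p ^ k) = abs2 p ^ k"
  by (induction k) (simp_all add: abs2_mult abs2_one)

definition FI1 :: "'a::comm_ring_1 \<Rightarrow> 'a \<Rightarrow> 'a \<Rightarrow> (nat \<Rightarrow> 'a) \<Rightarrow> (nat \<Rightarrow> 'a) \<Rightarrow> 'a" where
  "FI1 d c1 c2 a b = (\<Sum>i\<in>{0..3}. pA d (a i) (b i)) + c1 * (\<Sum>i\<in>{4..9}. pA d (a i) (b i)) + d * c2 * (\<Sum>i\<in>{4..9}. pB d (a i) (b i))"
definition FI2 :: "'a::comm_ring_1 \<Rightarrow> 'a \<Rightarrow> 'a \<Rightarrow> (nat \<Rightarrow> 'a) \<Rightarrow> (nat \<Rightarrow> 'a) \<Rightarrow> 'a" where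
  "FI2 d c1 c2 a b = (\<Sum>i\<in>{0..3}. pB d (a i) (b i)) + c1 * (\<Sum>i\<in>{4..9}. pB d (a i) (b i)) + c2 * (\<Sum>i\<in>{4..9}. pA d (a i) (b i))"

lemma kpow4_eq: "kpow4 d x = (pA d (fst x) (snd x), pB d (fst x) (snd x))"
  unfolding kpow4_def kmul_def pA_def pB_def Let_def
  by (simp add: algebra_simps power2_eq_square power4_eq_xxxx)

lemma Fpoly_eq: "Fpoly d (c1, c2) x = (FI1 d c1 c2 (\<lambda>i. fst (x i)) (\<lambda>i. snd (x i)), FI2 d c1 c2 (\<lambda>i. fst (x i)) (\<lambda>i. snd (x i)))"
  unfolding Fpoly_def FI1_def FI2_def kadd_def kmul_def ksum_def kpow4_eq
  by (simp add: algebra_simps)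

lemma pA_hom: "pA d (t*a) (t*b) = t^4 * pA d a b"
  unfolding pA_def by (simp add: algebra_simps power_mult_distrib)
lemma pB_hom: "pB d (t*a) (t*b) = t^4 * pB d a b"
  unfolding pB_def by (simp add: algebra_simps power_mult_distrib power4_eq_xxxx power2_eq_square)

lemma FI1_hom: "FI1 d c1 c2 (\<lambda>i. t * a i) (\<lambda>i. t * b i) = t^4 * FI1 d c1 c2 a b"
  unfolding FI1_def pA_hom pB_hom by (simp add: sum_distrib_left algebra_simps)
lemma FI2_hom: "FI2 d c1 c2 (\<lambda>i. t * a i) (\<lambda>i. t * b i) = t^4 * FI2 d c1 c2 a b"
  unfolding FI2_def pA_hom pB_hom by (simp add: sum_distrib_left algebra_simps)

lemma FI1_cong: "(\<And>i. i < 10 \<Longrightarrow> a i = a' i \<and> b i = b' i) \<Longrightarrow> FI1 d c1 c2 a b = FI1 d c1 c2 a' b'"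
  unfolding FI1_def by (intro arg_cong2[where f="(+)"] arg_cong2[where f="(*)"] sum.cong refl; simp)
lemma FI2_cong: "(\<And>i. i < 10 \<Longrightarrow> a i = a' i \<and> b i = b' i) \<Longrightarrow> FI2 d c1 c2 a b = FI2 d c1 c2 a' b'"
  unfolding FI2_def by (intro arg_cong2[where f="(+)"] arg_cong2[where f="(*)"] sum.cong refl; simp)

lemma FI1_of_int: "(of_int (FI1 d c1 c2 a b) :: rat) = FI1 (of_int d) (of_int c1) (of_int c2) (\<lambda>i. of_int (a i)) (\<lambda>i. of_int (b i))"
  unfolding FI1_def pA_def pB_def by simp
lemma FI2_of_int: "(of_int (FI2 d c1 c2 a b) :: rat) = FI2 (of_int d) (of_int c1) (of_int c2) (\<lambda>i. of_int (a i)) (\<lambda>i. of_int (b i))"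
  unfolding FI2_def pA_def pB_def by simp

lemma int_mult_denom:
  assumes "snd (quotient_of p) dvd D"
  shows "of_int \<lfloor>of_int D * p\<rfloor> = of_int D * (p::rat)"
proof -
  obtain n m where qm: "quotient_of p = (n, m)" by (cases "quotient_of p")
  have m: "m > 0" using quotient_of_denom_pos[OF qm] .
  have pe: "p = of_int n / of_int m" using quotient_of_div[OF qm] .
  obtain k where D: "D = m * k" using assms qm by (auto elim: dvdE)
  have "of_int D * p = of_int (k * n)" using pe D m by (simp add: field_simps)
  then show ?thesis by simp
qed

lemma final_ineq:
  fixes \<delta> e t F a :: real
  assumes "\<delta> > 0" "e > 0" "\<delta> * e \<le> t" "\<delta>^4 * F = t^4 * a" "a \<ge> 1/32"
  shows "F \<ge> e^4/32"
proof -
  have "(\<delta> * e)^4 \<le> t^4" using assms by (intro power_mono) auto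
  moreover have "t > 0" using assms(1,2,3) by (smt (verit) mult_pos_pos)
  then have "t^4 * (1/32) \<le> t^4 * a" using assms(5) by (intro mult_left_mono) auto
  ultimately have "(\<delta> * e)^4 / 32 \<le> t^4 * a" by linarith
  then have "\<delta>^4 * (e^4/32) \<le> \<delta>^4 * F" using assms(4) by (simp add: power_mult_distrib)
  then show ?thesis using assms(1) by simp
qed

lemma key:
  fixes x :: "nat \<Rightarrow> rat \<times> rat" and d c1 c2 :: int and e :: real
  assumes intlem: "\<And>a b::nat\<Rightarrow>int. FI1 d c1 c2 a b mod 64 = 0 \<Longrightarrow> FI2 d c1 c2 a b mod 64 = 0 \<Longrightarrow> \<forall>i<10. even (a i) \<and> even (b i)"
  and i0: "i0 < 10" and big: "abs2 (fst (x i0)) \<ge> e \<or> abs2 (snd (x i0)) \<ge> e" and e: "e > 0"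
  shows "abs2 (fst (Fpoly (of_int d) (of_int c1, of_int c2) x)) \<ge> e^4/32 \<or> abs2 (snd (Fpoly (of_int d) (of_int c1, of_int c2) x)) \<ge> e^4/32"
proof -
  define D where "D = (\<Prod>i<10. snd (quotient_of (fst (x i))) * snd (quotient_of (snd (x i))))"
  have Dpos: "D > 0" unfolding D_def
    by (intro prod_pos) (simp add: quotient_of_denom_pos')
  have dvdD: "snd (quotient_of (fst (x i))) dvd D \<and> snd (quotient_of (snd (x i))) dvd D" if "i < 10" for i
  proof -
    have "snd (quotient_of (fst (x i))) * snd (quotient_of (snd (x i))) dvd D"
      unfolding D_def using that by (intro dvd_prodI) auto
    then show ?thesis using dvd_mult_left dvd_mult_right by blast
  qed
  define za where "za i = \<lfloor>of_int D * fst (x i)\<rfloor>" for i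
  define zb where "zb i = \<lfloor>of_int D * snd (x i)\<rfloor>" for i
  have zeq: "of_int (za i) = of_int D * fst (x i) \<and> of_int (zb i) = of_int D * snd (x i)" if "i < 10" for i
    unfolding za_def zb_def using int_mult_denom dvdD[OF that] by blast
  obtain z p where zp: "(z = za i0 \<and> p = fst (x i0)) \<or> (z = zb i0 \<and> p = snd (x i0))" and pe: "abs2 p \<ge> e"
    using big by blast
  have zD: "of_int z = of_int D * p" using zp zeq[OF i0] by auto
  have p0: "p \<noteq> 0" using pe e by (auto simp: abs2_zero)
  have "(of_int D :: rat) \<noteq> 0" using Dpos by simp
  then have "(of_int z :: rat) \<noteq> 0" using zD p0 by simp
  then have z0: "z \<noteq> 0" by simp
  define P where "P k \<longleftrightarrow> (\<exists>i<10. \<not> 2^Suc k dvd za i \<or> \<not> 2^Suc k dvd zb i)" for k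
  have nu: "\<not> is_unit (2::int)" by simp
  have "\<not> 2^Suc (multiplicity 2 z) dvd z"
    using power_dvd_iff_le_multiplicity[OF z0 nu, of "Suc (multiplicity 2 z)"] by linarith
  then have Pm: "P (multiplicity 2 z)" unfolding P_def using zp i0 by blast
  define k where "k = (LEAST k. P k)"
  have Pk: "P k" unfolding k_def by (rule LeastI[of P, OF Pm])
  have alldiv: "2^k dvd za i \<and> 2^k dvd zb i" if "i < 10" for i
  proof (cases k)
    case 0 then show ?thesis by simp
  next
    case (Suc j)
    then have "j < k" by simp
    then have "\<not> P j" unfolding k_def by (rule not_less_Least)
    then show ?thesis using that Suc unfolding P_def by blast
  qed
  define wa where "wa i = za i div 2^k" for i
  define wb where "wb i = zb i div 2^k" for i
  have zw: "za i = 2^k * wa i \<and> zb i = 2^k * wb i" if "i < 10" for i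
    unfolding wa_def wb_def using alldiv[OF that] by simp
  from Pk obtain i1 where i1: "i1 < 10" "\<not> 2^Suc k dvd za i1 \<or> \<not> 2^Suc k dvd zb i1" unfolding P_def by blast
  have "odd (wa i1) \<or> odd (wb i1)"
  proof (rule ccontr)
    assume "\<not> (odd (wa i1) \<or> odd (wb i1))"
    then have "2^Suc k dvd 2^k * wa i1" "2^Suc k dvd 2^k * wb i1" by (auto elim!: evenE simp: mult_ac)
    then show False using i1 zw[OF i1(1)] by simp
  qed
  then have "\<not> (\<forall>i<10. even (wa i) \<and> even (wb i))" using i1 by blast
  then have nd: "\<not> 64 dvd FI1 d c1 c2 wa wb \<or> \<not> 64 dvd FI2 d c1 c2 wa wb" using intlem[of wa wb] by auto
  define \<delta> where "\<delta> = abs2 (of_int D)"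
  define t where "t = ((1::real)/2)^k"
  have \<delta>: "\<delta> > 0" unfolding \<delta>_def using Dpos by (intro abs2_pos) simp
  have wz: "z = 2^k * (if z = za i0 then wa i0 else wb i0)" using zp zw[OF i0] by auto
  have "abs2 (of_int z) = t * abs2 (of_int (if z = za i0 then wa i0 else wb i0))"
    by (subst wz) (simp add: abs2_mult abs2_pow abs2_two t_def)
  also have "\<dots> \<le> t" using abs2_int_le1 unfolding t_def by (simp add: mult_left_le)
  finally have "abs2 (of_int z) \<le> t" .
  moreover have "abs2 (of_int z) = \<delta> * abs2 p" unfolding \<delta>_def zD by (simp add: abs2_mult)
  moreover have "\<delta> * e \<le> \<delta> * abs2 p" using pe \<delta> by (intro mult_left_mono) auto
  ultimately have det: "\<delta> * e \<le> t" by linarith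
  have c1: "abs2 (of_int D)^4 * abs2 (fst (Fpoly (of_int d) (of_int c1, of_int c2) x)) = t^4 * abs2 (of_int (FI1 d c1 c2 wa wb))"
  proof -
    have "(of_int (FI1 d c1 c2 za zb) :: rat) = FI1 (of_int d) (of_int c1) (of_int c2) (\<lambda>i. of_int (za i)) (\<lambda>i. of_int (zb i))"
      by (rule FI1_of_int)
    also have "\<dots> = FI1 (of_int d) (of_int c1) (of_int c2) (\<lambda>i. of_int D * fst (x i)) (\<lambda>i. of_int D * snd (x i))"
      by (rule FI1_cong) (simp add: zeq)
    also have "\<dots> = of_int D ^ 4 * fst (Fpoly (of_int d) (of_int c1, of_int c2) x)"
      by (simp add: FI1_hom Fpoly_eq)
    finally have A: "(of_int (FI1 d c1 c2 za zb) :: rat) = of_int D ^ 4 * fst (Fpoly (of_int d) (of_int c1, of_int c2) x)" .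
    have "FI1 d c1 c2 za zb = FI1 d c1 c2 (\<lambda>i. 2^k * wa i) (\<lambda>i. 2^k * wb i)"
      by (rule FI1_cong) (simp add: zw)
    also have "\<dots> = (2^k)^4 * FI1 d c1 c2 wa wb" by (rule FI1_hom)
    finally have B: "FI1 d c1 c2 za zb = (2^k)^4 * FI1 d c1 c2 wa wb" .
    have "abs2 (of_int (FI1 d c1 c2 za zb)) = abs2 (of_int D)^4 * abs2 (fst (Fpoly (of_int d) (of_int c1, of_int c2) x))"
      unfolding A by (simp add: abs2_mult abs2_pow)
    moreover have "abs2 (of_int (FI1 d c1 c2 za zb)) = t^4 * abs2 (of_int (FI1 d c1 c2 wa wb))"
      unfolding B t_def by (simp add: abs2_mult abs2_pow abs2_two power_mult[symmetric] mult.commute)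
    ultimately show ?thesis by simp
  qed
  have c2: "abs2 (of_int D)^4 * abs2 (snd (Fpoly (of_int d) (of_int c1, of_int c2) x)) = t^4 * abs2 (of_int (FI2 d c1 c2 wa wb))"
  proof -
    have "(of_int (FI2 d c1 c2 za zb) :: rat) = FI2 (of_int d) (of_int c1) (of_int c2) (\<lambda>i. of_int (za i)) (\<lambda>i. of_int (zb i))"
      by (rule FI2_of_int)
    also have "\<dots> = FI2 (of_int d) (of_int c1) (of_int c2) (\<lambda>i. of_int D * fst (x i)) (\<lambda>i. of_int D * snd (x i))"
      by (rule FI2_cong) (simp add: zeq)
    also have "\<dots> = of_int D ^ 4 * snd (Fpoly (of_int d) (of_int c1, of_int c2) x)"
      by (simp add: FI2_hom Fpoly_eq)
    finally have A: "(of_int (FI2 d c1 c2 za zb) :: rat) = of_int D ^ 4 * snd (Fpoly (of_int d) (of_int c1, of_int c2) x)" .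
    have "FI2 d c1 c2 za zb = FI2 d c1 c2 (\<lambda>i. 2^k * wa i) (\<lambda>i. 2^k * wb i)"
      by (rule FI2_cong) (simp add: zw)
    also have "\<dots> = (2^k)^4 * FI2 d c1 c2 wa wb" by (rule FI2_hom)
    finally have B: "FI2 d c1 c2 za zb = (2^k)^4 * FI2 d c1 c2 wa wb" .
    have "abs2 (of_int (FI2 d c1 c2 za zb)) = abs2 (of_int D)^4 * abs2 (snd (Fpoly (of_int d) (of_int c1, of_int c2) x))"
      unfolding A by (simp add: abs2_mult abs2_pow)
    moreover have "abs2 (of_int (FI2 d c1 c2 za zb)) = t^4 * abs2 (of_int (FI2 d c1 c2 wa wb))"
      unfolding B t_def by (simp add: abs2_mult abs2_pow abs2_two power_mult[symmetric] mult.commute)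
    ultimately show ?thesis by simp
  qed
  from nd show ?thesis
  proof
    assume "\<not> 64 dvd FI1 d c1 c2 wa wb"
    then have "abs2 (of_int (FI1 d c1 c2 wa wb)) \<ge> 1/32" by (rule abs2_int_64)
    then show ?thesis using final_ineq[OF \<delta> e det c1[folded \<delta>_def]] by blast
  next
    assume "\<not> 64 dvd FI2 d c1 c2 wa wb"
    then have "abs2 (of_int (FI2 d c1 c2 wa wb)) \<ge> 1/32" by (rule abs2_int_64)
    then show ?thesis using final_ineq[OF \<delta> e det c2[folded \<delta>_def]] by blast
  qed
qed


lemma int_pos_case:
  fixes a b :: "nat \<Rightarrow> int" and d \<alpha> :: int
  assumes dd: "d = 2 \<or> d = 10" and al: "\<alpha> = 4 \<or> \<alpha> = 36"
  and VF: "\<And>a b. VFp \<alpha> (pA d a b) (pB d a b) (a mod 2) (b mod 2) ((a div 2) mod 2)"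
  and h1: "FI1 d 0 1 a b mod 64 = 0" and h2: "FI2 d 0 1 a b mod 64 = 0"
  shows "\<forall>i<10. even (a i) \<and> even (b i)"
proof -
  have e1: "FI1 d 0 1 a b = (\<Sum>i\<in>{0..3}. pA d (a i) (b i)) + d * (\<Sum>i\<in>{4..9}. pB d (a i) (b i))"
    by (simp add: FI1_def)
  have e2: "FI2 d 0 1 a b = (\<Sum>i\<in>{0..3}. pB d (a i) (b i)) + (\<Sum>i\<in>{4..9}. pA d (a i) (b i))"
    by (simp add: FI2_def)
  have "\<forall>i\<in>{0..3}\<union>{4..9}. a i mod 2 = 0 \<and> b i mod 2 = 0"
    by (rule stage_pos[OF dd al VF, of "\<lambda>i. a i" "\<lambda>i. b i"]) (use h1 h2 e1 e2 in simp_all)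
  moreover have "\<And>i::nat. i < 10 \<Longrightarrow> i \<in> {0..3}\<union>{4..9}" by auto
  ultimately show ?thesis by (auto simp: even_iff_mod_2_eq_zero)
qed

lemma int_neg_case:
  fixes a b :: "nat \<Rightarrow> int" and d \<alpha>0 \<alpha>1 :: int
  assumes dd: "d = -2 \<or> d = -10" and al: "\<alpha>0 = 4 \<and> \<alpha>1 = 36 \<or> \<alpha>0 = 36 \<and> \<alpha>1 = 4"
  and VF: "\<And>a b. VFn d \<alpha>0 \<alpha>1 (pA d a b) (pB d a b) (a mod 2) (b mod 2) ((a div 2) mod 2)"
  and h1: "FI1 d d 1 a b mod 64 = 0" and h2: "FI2 d d 1 a b mod 64 = 0"
  shows "\<forall>i<10. even (a i) \<and> even (b i)"
proof -
  have e1: "FI1 d d 1 a b = (\<Sum>i\<in>{0..3}. pA d (a i) (b i)) + d * (\<Sum>i\<in>{4..9}. pA d (a i) (b i)) + d * (\<Sum>i\<in>{4..9}. pB d (a i) (b i))"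
    by (simp add: FI1_def)
  have e2: "FI2 d d 1 a b = (\<Sum>i\<in>{0..3}. pB d (a i) (b i)) + d * (\<Sum>i\<in>{4..9}. pB d (a i) (b i)) + (\<Sum>i\<in>{4..9}. pA d (a i) (b i))"
    by (simp add: FI2_def)
  have "\<forall>i\<in>{0..3}\<union>{4..9}. a i mod 2 = 0 \<and> b i mod 2 = 0"
    by (rule stage_neg[OF dd al VF, of "\<lambda>i. a i" "\<lambda>i. b i"]) (use h1 h2 e1 e2 in simp_all)
  moreover have "\<And>i::nat. i < 10 \<Longrightarrow> i \<in> {0..3}\<union>{4..9}" by auto
  ultimately show ?thesis by (auto simp: even_iff_mod_2_eq_zero)
qed

lemma no_zero:
  fixes d c1 c2 :: int
  assumes intlem: "\<And>a b::nat\<Rightarrow>int. FI1 d c1 c2 a b mod 64 = 0 \<Longrightarrow> FI2 d c1 c2 a b mod 64 = 0 \<Longrightarrow> \<forall>i<10. even (a i) \<and> even (b i)"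
  shows "\<not> has_nontrivial_zero (of_int d) (of_int c1, of_int c2)"
proof
  assume "has_nontrivial_zero (of_int d) (of_int c1, of_int c2)"
  then obtain X where nz: "\<exists>i<10. \<not> Knull (X i)"
    and F: "Knull (\<lambda>n. Fpoly (of_int d) (of_int c1, of_int c2) (\<lambda>i. X i n))"
    unfolding has_nontrivial_zero_def by blast
  from nz obtain i0 where i0: "i0 < 10" and nk: "\<not> Knull (X i0)" by blast
  have "\<exists>e>0. \<forall>N. \<exists>n\<ge>N. abs2 (fst (X i0 n)) \<ge> e \<or> abs2 (snd (X i0 n)) \<ge> e"
  proof (cases "null2 (\<lambda>n. fst (X i0 n))")
    case True
    then have "\<not> null2 (\<lambda>n. snd (X i0 n))" using nk unfolding Knull_def by blast
    then obtain e where "e > 0" "\<forall>N. \<exists>n\<ge>N. \<not> abs2 (snd (X i0 n)) < e" unfolding null2_def by blast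
    then show ?thesis by (metis not_less)
  next
    case False
    then obtain e where "e > 0" "\<forall>N. \<exists>n\<ge>N. \<not> abs2 (fst (X i0 n)) < e" unfolding null2_def by blast
    then show ?thesis by (metis not_less)
  qed
  then obtain e where e: "e > 0" and inf: "\<And>N. \<exists>n\<ge>N. abs2 (fst (X i0 n)) \<ge> e \<or> abs2 (snd (X i0 n)) \<ge> e" by blast
  have ep: "e^4/32 > 0" using e by simp
  from F ep obtain N1 where N1: "\<And>n. n \<ge> N1 \<Longrightarrow> abs2 (fst (Fpoly (of_int d) (of_int c1, of_int c2) (\<lambda>i. X i n))) < e^4/32"
    unfolding Knull_def null2_def by blast
  from F ep obtain N2 where N2: "\<And>n. n \<ge> N2 \<Longrightarrow> abs2 (snd (Fpoly (of_int d) (of_int c1, of_int c2) (\<lambda>i. X i n))) < e^4/32"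
    unfolding Knull_def null2_def by blast
  obtain n where n: "n \<ge> max N1 N2" and big: "abs2 (fst (X i0 n)) \<ge> e \<or> abs2 (snd (X i0 n)) \<ge> e"
    using inf by blast
  have "abs2 (fst (Fpoly (of_int d) (of_int c1, of_int c2) (\<lambda>i. X i n))) \<ge> e^4/32 \<or> abs2 (snd (Fpoly (of_int d) (of_int c1, of_int c2) (\<lambda>i. X i n))) \<ge> e^4/32"
    by (rule key[OF intlem i0 _ e]) (use big in auto)
  then show False using N1[of n] N2[of n] n by auto
qed

lemma nz2: "\<not> has_nontrivial_zero 2 kpi"
proof -
  have "\<not> has_nontrivial_zero (of_int 2) (of_int 0, of_int 1)"
    by (rule no_zero, rule int_pos_case[of 2 4]) (simp_all add: VF2)
  then show ?thesis by (simp add: kpi_def)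
qed

lemma nz10: "\<not> has_nontrivial_zero 10 kpi"
proof -
  have "\<not> has_nontrivial_zero (of_int 10) (of_int 0, of_int 1)"
    by (rule no_zero, rule int_pos_case[of 10 36]) (simp_all add: VF10)
  then show ?thesis by (simp add: kpi_def)
qed

lemma nzm2: "\<not> has_nontrivial_zero (-2) (kadd kpi (kmul (-2) kpi kpi))"
proof -
  have "\<not> has_nontrivial_zero (of_int (-2)) (of_int (-2), of_int 1)"
    by (rule no_zero, rule int_neg_case[of "-2" 4 36]) (simp_all add: VFm2)
  moreover have "kadd kpi (kmul (-2) kpi kpi) = (-2, 1)" by (simp add: kpi_def kadd_def kmul_def)
  ultimately show ?thesis by simp
qed

lemma nzm10: "\<not> has_nontrivial_zero (-10) (kadd kpi (kmul (-10) kpi kpi))"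
proof -
  have "\<not> has_nontrivial_zero (of_int (-10)) (of_int (-10), of_int 1)"
    by (rule no_zero, rule int_neg_case[of "-10" 36 4]) (simp_all add: VFm10)
  moreover have "kadd kpi (kmul (-10) kpi kpi) = (-10, 1)" by (simp add: kpi_def kadd_def kmul_def)
  ultimately show ?thesis by simp
qed

theorem mainTheorem2:
  shows "\<not> has_nontrivial_zero 2 kpi \<and> \<not> has_nontrivial_zero 10 kpi \<and>
         \<not> has_nontrivial_zero (-2) (kadd kpi (kmul (-2) kpi kpi)) \<and>
         \<not> has_nontrivial_zero (-10) (kadd kpi (kmul (-10) kpi kpi))"
  using nz2 nz10 nzm2 nzm10 by blast

end
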